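(* Let $n\ge 2$ and $\alpha\in(0,1)$. Then $$\{\mathrm{DQ}^{\mathrm{VaR}}_\alpha(\mathbf X):\mathbf X\in (L^0)^n\}=[0,\min\{n,1/\alpha\}]\quad\text{and}\quad \{\mathrm{DQ}^{\mathrm{ES}}_\alpha(\mathbf X):\mathbf X\in (L^1)^n\}=[0,1].$$
   Context: Let $(\Omega,\mathcal F,\mathbb P)$ be an atomless probability space. $L^0$ is the set of all random variables and $L^1$ the set of integrable random variables; a.s. equal random variables are identified. For $\alpha\in[0,1)$ and $X\in L^0$, $\mathrm{VaR}_\alpha(X)=\inf\{x\in\mathbb R:\mathbb P(X\le x)\ge 1-\alpha\}$; in particular $\mathrm{VaR}_0(X)=\operatorname{ess\,sup}X$, possibly $+\infty$. For $\alpha\in(0,1)$ and $X\in L^1$, $\mathrm{ES}_\alpha(X)=\frac1\alpha\int_0^\alpha\mathrm{VaR}_\beta(X)\,\mathrm d\beta$, and $\mathrm{ES}_0(X)=\operatorname{ess\,sup}X$. For $\rho\in\{\mathrm{VaR},\mathrm{ES}\}$, $\alpha\in(0,1)$ and $\mathbf X=(X_1,\dots,X_n)$ (in $(L^0)^n$ when $\rho=\mathrm{VaR}$, in $(L^1)^n$ when $\rho=\mathrm{ES}$), the diversification quotient is $\mathrm{DQ}^\rho_\alpha(\mathbf X)=\alpha^*/\alpha$, where $\alpha^*=\inf\{\beta\in(0,1):\rho_\beta(\sum_{i=1}^nX_i)\le\sum_{i=1}^n\rho_\alpha(X_i)\}$, with the convention $\inf\emptyset=1$. *)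

theory Defs
  imports "HOL-Probability.Probability"
begin

definition atomless :: "'a measure \<Rightarrow> bool" where
  "atomless M \<longleftrightarrow> (\<forall>A\<in>sets M. 0 < measure M A \<longrightarrow>
      (\<exists>B\<in>sets M. B \<subseteq> A \<and> 0 < measure M B \<and> measure M B < measure M A))"

definition VaR :: "'a measure \<Rightarrow> real \<Rightarrow> ('a \<Rightarrow> real) \<Rightarrow> real" where
  "VaR M \<alpha> X = Inf {x. measure M {\<omega> \<in> space M. X \<omega> \<le> x} \<ge> 1 - \<alpha>}"

definition ES :: "'a measure \<Rightarrow> real \<Rightarrow> ('a \<Rightarrow> real) \<Rightarrow> real" where
  "ES M \<alpha> X = (\<integral>\<beta>\<in>{0<..<\<alpha>}. VaR M \<beta> X \<partial>lborel) / \<alpha>"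

definition DQ :: "(real \<Rightarrow> ('a \<Rightarrow> real) \<Rightarrow> real) \<Rightarrow> real \<Rightarrow> nat \<Rightarrow> (nat \<Rightarrow> 'a \<Rightarrow> real) \<Rightarrow> real" where
  "DQ \<rho> \<alpha> n X =
     (let S = {\<beta> \<in> {0<..<1}. \<rho> \<beta> (\<lambda>\<omega>. \<Sum>i<n. X i \<omega>) \<le> (\<Sum>i<n. \<rho> \<alpha> (X i))}
      in (if S = {} then 1 else Inf S) / \<alpha>)"

end

theory Submission
  imports Defs
begin

lemma inf_quantile_le_iff:
  fixes F :: "real \<Rightarrow> real" and c y :: real
  assumes mono: "\<And>x y. x \<le> y \<Longrightarrow> F x \<le> F y"
    and rc: "\<And>a. continuous (at_right a) F"
    and bot: "(F \<longlongrightarrow> 0) at_bot" and top: "(F \<longlongrightarrow> 1) at_top"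
    and c: "0 < c" "c < 1"
  shows "Inf {x. c \<le> F x} \<le> y \<longleftrightarrow> c \<le> F y"
proof -
  let ?Q = "{x. c \<le> F x}"
  have "eventually (\<lambda>x. F x > c) at_top"
    using top c by (simp add: order_tendsto_iff)
  then obtain x0 where "\<And>x. x \<ge> x0 \<Longrightarrow> F x > c" by (auto simp: eventually_at_top_linorder)
  hence ne: "x0 \<in> ?Q" by fastforce
  have "eventually (\<lambda>x. F x < c) at_bot"
    using bot c by (simp add: order_tendsto_iff)
  then obtain x1 where x1: "\<And>x. x \<le> x1 \<Longrightarrow> F x < c" by (auto simp: eventually_at_bot_linorder)
  have bdd: "bdd_below ?Q"
  proof
    fix x assume "x \<in> ?Q" thus "x1 \<le> x" using x1[of x] by force
  qed
  let ?m = "Inf ?Q"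
  have inQ: "c \<le> F ?m"
  proof -
    have ev: "eventually (\<lambda>x. c \<le> F x) (at_right ?m)"
    proof (rule eventually_at_rightI[where b = "?m + 1"])
      fix x assume "x \<in> {?m<..<?m+1}"
      hence "?m < x" by simp
      then obtain q where "q \<in> ?Q" "q < x" using cInf_lessD[of ?Q x] ne by blast
      thus "c \<le> F x" using mono[of q x] by simp
    qed simp
    have "(F \<longlongrightarrow> F ?m) (at_right ?m)" using rc[of ?m] by (simp add: continuous_within)
    thus ?thesis
      by (rule tendsto_lowerbound[OF _ ev]) simp
  qed
  show ?thesis
  proof
    assume "?m \<le> y" thus "c \<le> F y" using inQ mono[of ?m y] by simp
  next
    assume "c \<le> F y" thus "?m \<le> y" using bdd by (intro cInf_lower) auto
  qed
qed


context prob_space begin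

lemma cdf_distr_eq:
  assumes "X \<in> borel_measurable M"
  shows "cdf (distr M borel X) x = measure M {\<omega>\<in>space M. X \<omega> \<le> x}"
  using assms unfolding cdf_def
  by (subst measure_distr) (auto intro!: arg_cong[where f="measure M"])

lemma VaR_le_iff:
  assumes X: "X \<in> borel_measurable M" and b: "0 < \<beta>" "\<beta> < 1"
  shows "VaR M \<beta> X \<le> y \<longleftrightarrow> 1 - \<beta> \<le> measure M {\<omega>\<in>space M. X \<omega> \<le> y}"
proof -
  interpret D: real_distribution "distr M borel X" using X by simp
  have "VaR M \<beta> X = Inf {x. 1 - \<beta> \<le> cdf (distr M borel X) x}"
    unfolding VaR_def using cdf_distr_eq[OF X] by simp
  also have "\<dots> \<le> y \<longleftrightarrow> 1 - \<beta> \<le> cdf (distr M borel X) y"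
    by (rule inf_quantile_le_iff) (use b D.cdf_nondecreasing D.cdf_is_right_cont D.cdf_lim_at_bot D.cdf_lim_at_top_prob in auto)
  finally show ?thesis using cdf_distr_eq[OF X] by simp
qed

lemma VaR_eqI:
  assumes X: "X \<in> borel_measurable M" and b: "0 < \<beta>" "\<beta> < 1"
    and h: "\<And>y. 1 - \<beta> \<le> measure M {\<omega>\<in>space M. X \<omega> \<le> y} \<longleftrightarrow> v \<le> y"
  shows "VaR M \<beta> X = v"
proof (rule order.antisym)
  show "VaR M \<beta> X \<le> v" using VaR_le_iff[OF X b, of v] h[of v] by simp
  show "v \<le> VaR M \<beta> X" using VaR_le_iff[OF X b, of "VaR M \<beta> X"] h[of "VaR M \<beta> X"] by simp
qed

lemma VaR_antimono:
  assumes X: "X \<in> borel_measurable M" and b: "0 < \<beta>" "\<beta> \<le> \<beta>'" "\<beta>' < 1"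
  shows "VaR M \<beta>' X \<le> VaR M \<beta> X"
proof -
  have "1 - \<beta> \<le> measure M {\<omega>\<in>space M. X \<omega> \<le> VaR M \<beta> X}"
    using VaR_le_iff[OF X, of \<beta> "VaR M \<beta> X"] b by simp
  thus ?thesis using VaR_le_iff[OF X, of \<beta>' "VaR M \<beta> X"] b by simp
qed

lemma VaR_sum_le:
  fixes X :: "nat \<Rightarrow> 'a \<Rightarrow> real"
  assumes X: "\<And>i. i < n \<Longrightarrow> X i \<in> borel_measurable M"
    and a: "0 < \<alpha>" "real n * \<alpha> < 1" and n: "n \<ge> 1"
  shows "VaR M (real n * \<alpha>) (\<lambda>\<omega>. \<Sum>i<n. X i \<omega>) \<le> (\<Sum>i<n. VaR M \<alpha> (X i))"
proof -
  let ?v = "\<lambda>i. VaR M \<alpha> (X i)"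
  have "1 * \<alpha> \<le> real n * \<alpha>" by (rule mult_right_mono) (use n a in auto)
  hence a1: "\<alpha> < 1" using a by linarith
  have na: "0 < real n * \<alpha>" using n a by simp
  have sm: "(\<lambda>\<omega>. \<Sum>i<n. X i \<omega>) \<in> borel_measurable M" using X by auto
  have evs: "{\<omega>\<in>space M. ?v i < X i \<omega>} \<in> sets M" if i: "i < n" for i
    using X[OF i] by (simp add: borel_measurable_iff_greater)
  have pi: "measure M {\<omega>\<in>space M. ?v i < X i \<omega>} \<le> \<alpha>" if i: "i < n" for i
  proof -
    have "1 - \<alpha> \<le> measure M {\<omega>\<in>space M. X i \<omega> \<le> ?v i}"
      using VaR_le_iff[OF X[OF i], of \<alpha> "?v i"] a a1 by simp
    moreover have "{\<omega>\<in>space M. X i \<omega> \<le> ?v i} = space M - {\<omega>\<in>space M. ?v i < X i \<omega>}" by auto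
    ultimately show ?thesis using prob_compl[OF evs[OF i]] by simp
  qed
  have sub: "{\<omega>\<in>space M. (\<Sum>i<n. ?v i) < (\<Sum>i<n. X i \<omega>)} \<subseteq> (\<Union>i\<in>{..<n}. {\<omega>\<in>space M. ?v i < X i \<omega>})"
  proof
    fix \<omega> assume w: "\<omega> \<in> {\<omega>\<in>space M. (\<Sum>i<n. ?v i) < (\<Sum>i<n. X i \<omega>)}"
    have "\<not> (\<forall>i\<in>{..<n}. X i \<omega> \<le> ?v i)"
    proof
      assume "\<forall>i\<in>{..<n}. X i \<omega> \<le> ?v i"
      hence "(\<Sum>i<n. X i \<omega>) \<le> (\<Sum>i<n. ?v i)" by (intro sum_mono) blast
      with w show False by simp
    qed
    then obtain i where "i < n" "?v i < X i \<omega>" by (auto simp: not_le)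
    thus "\<omega> \<in> (\<Union>i\<in>{..<n}. {\<omega>\<in>space M. ?v i < X i \<omega>})" using w by blast
  qed
  have "measure M {\<omega>\<in>space M. (\<Sum>i<n. ?v i) < (\<Sum>i<n. X i \<omega>)}
      \<le> measure M (\<Union>i\<in>{..<n}. {\<omega>\<in>space M. ?v i < X i \<omega>})"
    by (rule finite_measure_mono[OF sub]) (intro sets.finite_UN; use evs in simp)
  also have "\<dots> \<le> (\<Sum>i<n. measure M {\<omega>\<in>space M. ?v i < X i \<omega>})"
    by (rule finite_measure_subadditive_finite) (use evs in auto)
  also have "\<dots> \<le> (\<Sum>i<n. \<alpha>)" by (rule sum_mono) (use pi in simp)
  finally have le: "measure M {\<omega>\<in>space M. (\<Sum>i<n. ?v i) < (\<Sum>i<n. X i \<omega>)} \<le> real n * \<alpha>" by simp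
  have e2: "{\<omega>\<in>space M. (\<Sum>i<n. ?v i) < (\<Sum>i<n. X i \<omega>)} \<in> sets M"
    using sm by (simp add: borel_measurable_iff_greater)
  have "{\<omega>\<in>space M. (\<Sum>i<n. X i \<omega>) \<le> (\<Sum>i<n. ?v i)} = space M - {\<omega>\<in>space M. (\<Sum>i<n. ?v i) < (\<Sum>i<n. X i \<omega>)}"
    by auto
  hence "1 - real n * \<alpha> \<le> measure M {\<omega>\<in>space M. (\<Sum>i<n. X i \<omega>) \<le> (\<Sum>i<n. ?v i)}"
    using le prob_compl[OF e2] by simp
  thus ?thesis using VaR_le_iff[OF sm na a(2)] by simp
qed

end


context prob_space begin

lemma small_subset:
  assumes al: "atomless M" and A: "A \<in> sets M" "0 < prob A" and e: "0 < \<epsilon>"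
  shows "\<exists>B\<in>sets M. B \<subseteq> A \<and> 0 < prob B \<and> prob B < \<epsilon>"
proof -
  have "\<exists>B\<in>sets M. B \<subseteq> A \<and> 0 < prob B \<and> prob B \<le> prob A / 2^k" for k
  proof (induction k)
    case 0 show ?case using A by auto
  next
    case (Suc k)
    then obtain B where B: "B \<in> sets M" "B \<subseteq> A" "0 < prob B" "prob B \<le> prob A / 2^k" by blast
    then obtain C where C: "C \<in> sets M" "C \<subseteq> B" "0 < prob C" "prob C < prob B"
      using al unfolding atomless_def by blast
    have d: "prob (B - C) = prob B - prob C" using B C by (simp add: finite_measure_Diff)
    show ?case
    proof (cases "prob C \<le> prob B / 2")
      case True thus ?thesis using B C by (intro bexI[of _ C]) auto
    next
      case False thus ?thesis using B C d by (intro bexI[of _ "B - C"]) auto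
    qed
  qed
  moreover obtain k where k: "(1/2::real)^k < \<epsilon>" using real_arch_pow_inv[OF e, of "1/2"] by auto
  moreover have "prob A / 2^k \<le> (1/2::real)^k"
    by (simp add: divide_le_cancel power_one_over)
  ultimately show ?thesis by (meson le_less_trans order_trans)
qed

lemma exists_subset_measure:
  assumes al: "atomless M" and A: "A \<in> sets M" and p: "0 \<le> p" "p \<le> prob A"
  shows "\<exists>B\<in>sets M. B \<subseteq> A \<and> prob B = p"
proof -
  define good where "good B \<longleftrightarrow> B \<in> sets M \<and> B \<subseteq> A \<and> prob B \<le> p" for B
  define T where "T B = {C. C \<in> sets M \<and> C \<subseteq> A - B \<and> prob B + prob C \<le> p}" for B
  have "\<exists>C. good B \<longrightarrow> (C \<in> T B \<and> (\<forall>D\<in>T B. prob D \<le> 2 * prob C))" for B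
  proof (cases "good B")
    case True
    let ?s = "Sup (prob ` T B)"
    have e: "{} \<in> T B" using True by (auto simp: T_def good_def)
    have bdd: "bdd_above (prob ` T B)" by (intro bdd_aboveI[of _ 1]) auto
    show ?thesis
    proof (cases "?s \<le> 0")
      case True
      have "\<forall>D\<in>T B. prob D \<le> 2 * prob {}"
        using cSup_upper[OF _ bdd] True by fastforce
      thus ?thesis using e by blast
    next
      case False
      hence "?s / 2 < ?s" by simp
      then obtain x where "x \<in> prob ` T B" "?s / 2 < x"
        using less_cSupD[of "prob ` T B" "?s/2"] e by blast
      then obtain C where C: "C \<in> T B" "?s / 2 < prob C" by blast
      have "\<forall>D\<in>T B. prob D \<le> 2 * prob C"
        using cSup_upper[OF _ bdd] C by fastforce
      thus ?thesis using C by blast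
    qed
  qed simp
  then obtain f where f: "\<And>B. good B \<Longrightarrow> f B \<in> T B \<and> (\<forall>D\<in>T B. prob D \<le> 2 * prob (f B))"
    by metis
  define Bs where "Bs = rec_nat {} (\<lambda>_ B. B \<union> f B)"
  have Bs0: "Bs 0 = {}" and BsS: "\<And>k. Bs (Suc k) = Bs k \<union> f (Bs k)" by (simp_all add: Bs_def)
  have gd: "good (Bs k)" for k
  proof (induction k)
    case 0 show ?case using p A by (simp add: Bs0 good_def)
  next
    case (Suc k)
    have fk: "f (Bs k) \<in> T (Bs k)" using f[OF Suc] by blast
    hence "prob (Bs k \<union> f (Bs k)) = prob (Bs k) + prob (f (Bs k))"
      using Suc by (intro finite_measure_Union) (auto simp: T_def good_def)
    thus ?case using fk Suc by (auto simp: BsS T_def good_def)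
  qed
  have stepP: "prob (Bs (Suc k)) = prob (Bs k) + prob (f (Bs k))" for k
  proof -
    have fk: "f (Bs k) \<in> T (Bs k)" using f[OF gd] by blast
    thus ?thesis unfolding BsS
      using gd[of k] by (intro finite_measure_Union) (auto simp: T_def good_def)
  qed
  have inc: "incseq Bs" by (rule incseq_SucI) (simp add: BsS)
  have rng: "range Bs \<subseteq> sets M" using gd by (auto simp: good_def)
  let ?B = "\<Union>(range Bs)"
  have Bset: "?B \<in> sets M" using rng by auto
  have BA: "?B \<subseteq> A" using gd by (auto simp: good_def)
  have lim: "(\<lambda>k. prob (Bs k)) \<longlonglongrightarrow> prob ?B"
    by (rule finite_Lim_measure_incseq[OF rng inc])
  have Bp: "prob ?B \<le> p"
    by (rule LIMSEQ_le_const2[OF lim]) (use gd in \<open>auto simp: good_def\<close>)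
  have "prob ?B = p"
  proof (rule ccontr)
    assume "prob ?B \<noteq> p"
    hence lt: "prob ?B < p" using Bp by simp
    have "prob (A - ?B) = prob A - prob ?B" using BA Bset A by (simp add: finite_measure_Diff)
    hence "0 < prob (A - ?B)" using lt p by simp
    then obtain D where D: "D \<in> sets M" "D \<subseteq> A - ?B" "0 < prob D" "prob D < p - prob ?B"
      using small_subset[OF al _ _, of "A - ?B" "p - prob ?B"] A Bset lt by auto
    have DT: "D \<in> T (Bs k)" for k
    proof -
      have "prob (Bs k) \<le> prob ?B" by (rule finite_measure_mono) (use Bset in auto)
      thus ?thesis using D by (auto simp: T_def)
    qed
    have grow: "real k * prob D / 2 \<le> prob (Bs k)" for k
    proof (induction k)
      case 0 show ?case by (simp add: Bs0)
    next
      case (Suc k)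
      have "prob D \<le> 2 * prob (f (Bs k))" using f[OF gd] DT by blast
      thus ?case using Suc stepP[of k] by (simp add: algebra_simps)
    qed
    obtain k :: nat where "2 / prob D < real k" using reals_Archimedean2 by blast
    hence "2 < real k * prob D" using D(3) by (simp add: field_simps)
    hence "1 < prob (Bs k)" using grow[of k] by simp
    thus False using prob_le_1[of "Bs k"] by simp
  qed
  thus ?thesis using Bset BA by blast
qed

lemma exists_disjoint_events:
  assumes al: "atomless M" and q: "0 \<le> q" "real k * q \<le> 1"
  shows "\<exists>A. (\<forall>i<k. A i \<in> sets M \<and> prob (A i) = q) \<and> disjoint_family_on A {..<k}"
  using q(2)
proof (induction k)
  case 0 show ?case by (auto simp: disjoint_family_on_def)
next
  case (Suc k)
  have "real k * q \<le> 1" using Suc.prems q(1)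
    by (metis add.commute le_add_same_cancel2 mult_Suc of_nat_Suc order_trans distrib_right mult_1 )
  then obtain A where A: "\<forall>i<k. A i \<in> sets M \<and> prob (A i) = q" "disjoint_family_on A {..<k}"
    using Suc.IH by blast
  let ?U = "\<Union>i\<in>{..<k}. A i"
  have U: "?U \<in> sets M" using A by auto
  have "prob ?U = (\<Sum>i<k. prob (A i))"
    by (rule finite_measure_finite_Union) (use A in auto)
  also have "\<dots> = real k * q" using A by simp
  finally have PU: "prob ?U = real k * q" .
  have "prob (space M - ?U) = 1 - real k * q" using prob_compl[OF U] PU by simp
  moreover have "1 - real k * q \<ge> q" using Suc.prems by (simp add: algebra_simps)
  ultimately obtain B where B: "B \<in> sets M" "B \<subseteq> space M - ?U" "prob B = q"
    using exists_subset_measure[OF al _ q(1), of "space M - ?U"] U by auto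
  show ?case
  proof (intro exI[of _ "A(k := B)"] conjI)
    show "\<forall>i<Suc k. (A(k := B)) i \<in> sets M \<and> prob ((A(k := B)) i) = q"
      using A B by (auto simp: less_Suc_eq)
  next
    show "disjoint_family_on (A(k := B)) {..<Suc k}"
      using A(2) B(2) unfolding disjoint_family_on_def by (auto simp: lessThan_Suc)
  qed
qed

end


definition infS :: "real set \<Rightarrow> real" where
  "infS S = (if S = {} then 1 else Inf S)"

lemma DQ_infS: "DQ \<rho> \<alpha> n X = infS {\<beta> \<in> {0<..<1}. \<rho> \<beta> (\<lambda>\<omega>. \<Sum>i<n. X i \<omega>) \<le> (\<Sum>i<n. \<rho> \<alpha> (X i))} / \<alpha>"
  by (simp add: DQ_def infS_def Let_def)

lemma infS_bounds:
  assumes "S \<subseteq> {0<..<1}"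
  shows "0 \<le> infS S" "infS S \<le> 1"
proof -
  have bdd: "bdd_below S" using assms by (intro bdd_belowI[of _ 0]) auto
  show "0 \<le> infS S" unfolding infS_def using assms by (auto intro!: cInf_greatest)
  show "infS S \<le> 1" unfolding infS_def
  proof (cases "S = {}")
    case False
    then obtain b where "b \<in> S" by blast
    hence "Inf S \<le> b" using bdd by (intro cInf_lower)
    thus "(if S = {} then 1 else Inf S) \<le> 1" using \<open>b \<in> S\<close> assms False by auto
  qed simp
qed

lemma infS_le:
  assumes "S \<subseteq> {0<..<1}" "b \<in> S"
  shows "infS S \<le> b"
proof -
  have bdd: "bdd_below S" using assms by (intro bdd_belowI[of _ 0]) auto
  thus ?thesis using assms unfolding infS_def by (auto intro: cInf_lower)
qed

lemma infS_eq:
  assumes "0 \<le> \<gamma>" "\<gamma> \<le> 1"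
  shows "infS {\<beta> \<in> {0<..<1}. \<gamma> \<le> \<beta>} = \<gamma>"
proof (cases "\<gamma> = 1")
  case True thus ?thesis by (simp add: infS_def)
next
  case False
  hence g1: "\<gamma> < 1" using assms by simp
  show ?thesis
  proof (cases "\<gamma> = 0")
    case True
    hence "{\<beta> \<in> {0<..<1}. \<gamma> \<le> \<beta>} = {0<..<1::real}" by auto
    thus ?thesis by (simp add: infS_def True)
  next
    case False
    hence "{\<beta> \<in> {0<..<1}. \<gamma> \<le> \<beta>} = {\<gamma>..<1::real}" using assms by auto
    thus ?thesis using g1 by (simp add: infS_def)
  qed
qed

context prob_space begin

lemma DQ_VaR_upper:
  assumes X: "\<forall>i<n. X i \<in> borel_measurable M" and n: "n \<ge> 2" and a: "0 < \<alpha>" "\<alpha> < 1"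
  shows "DQ (VaR M) \<alpha> n X \<in> {0 .. min (real n) (1 / \<alpha>)}"
proof -
  let ?S = "{\<beta> \<in> {0<..<1}. VaR M \<beta> (\<lambda>\<omega>. \<Sum>i<n. X i \<omega>) \<le> (\<Sum>i<n. VaR M \<alpha> (X i))}"
  have sub: "?S \<subseteq> {0<..<1}" by auto
  have d: "DQ (VaR M) \<alpha> n X = infS ?S / \<alpha>" by (rule DQ_infS)
  have 0: "0 \<le> infS ?S / \<alpha>" using infS_bounds[OF sub] a by simp
  have 1: "infS ?S / \<alpha> \<le> 1 / \<alpha>" using infS_bounds[OF sub] a by (simp add: divide_right_mono)
  have 2: "infS ?S / \<alpha> \<le> real n"
  proof (cases "real n * \<alpha> < 1")
    case True
    have "real n * \<alpha> \<in> ?S"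
      using VaR_sum_le[of n X \<alpha>] X a n True by (auto simp: zero_less_mult_iff)
    hence "infS ?S \<le> real n * \<alpha>" by (rule infS_le[OF sub])
    thus ?thesis using a by (simp add: divide_le_eq)
  next
    case False
    hence "1 / \<alpha> \<le> real n" using a by (simp add: divide_le_eq mult.commute)
    thus ?thesis using 1 by linarith
  qed
  show ?thesis using 0 1 2 d by simp
qed

lemma DQ_VaR_attain:
  assumes al: "atomless M" and n: "n \<ge> 2" and a: "0 < \<alpha>" "\<alpha> < 1"
    and t: "0 \<le> t" "t \<le> min (real n) (1 / \<alpha>)"
  shows "\<exists>X. (\<forall>i<n. X i \<in> borel_measurable M) \<and> DQ (VaR M) \<alpha> n X = t"
proof -
  define \<gamma> where "\<gamma> = t * \<alpha>"
  have g0: "0 \<le> \<gamma>" using t a by (simp add: \<gamma>_def)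
  have g1: "\<gamma> \<le> 1" using t a by (simp add: \<gamma>_def le_divide_eq)
  have gn: "\<gamma> \<le> real n * \<alpha>" using t a by (simp add: \<gamma>_def)
  define q where "q = \<gamma> / real n"
  have npos: "real n > 0" using n by simp
  have q0: "0 \<le> q" using g0 npos by (simp add: q_def)
  have nq: "real n * q = \<gamma>" using npos by (simp add: q_def)
  have qa: "q \<le> \<alpha>" using gn npos by (simp add: q_def divide_le_eq mult.commute)
  obtain A where A: "\<forall>i<n. A i \<in> sets M \<and> prob (A i) = q" "disjoint_family_on A {..<n}"
    using exists_disjoint_events[OF al q0, of n] nq g1 by auto
  define X where "X i = (indicator (A i) :: 'a \<Rightarrow> real)" for i
  have Xm: "\<forall>i<n. X i \<in> borel_measurable M" using A by (auto simp: X_def)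
  have VX: "VaR M \<alpha> (X i) = 0" if i: "i < n" for i
  proof (rule VaR_eqI[OF _ a])
    show "X i \<in> borel_measurable M" using Xm i by simp
    fix y :: real
    show "1 - \<alpha> \<le> prob {\<omega> \<in> space M. X i \<omega> \<le> y} \<longleftrightarrow> 0 \<le> y"
    proof (cases "0 \<le> y")
      case True
      have sub: "space M - A i \<subseteq> {\<omega> \<in> space M. X i \<omega> \<le> y}" using True by (auto simp: X_def)
      have "prob (space M - A i) = 1 - q" using prob_compl[of "A i"] A i by simp
      moreover have "prob (space M - A i) \<le> prob {\<omega> \<in> space M. X i \<omega> \<le> y}"
        by (rule finite_measure_mono[OF sub]) (use Xm i in \<open>simp add: borel_measurable_iff_le\<close>)
      ultimately show ?thesis using True qa by simp
    next
      case False
      hence e: "{\<omega> \<in> space M. X i \<omega> \<le> y} = {}" by (auto simp: X_def indicator_def)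
      show ?thesis unfolding e using False a by simp
    qed
  qed
  let ?U = "\<Union>i\<in>{..<n}. A i"
  have U: "?U \<in> sets M" using A by auto
  have PU: "prob ?U = \<gamma>"
  proof -
    have "prob ?U = (\<Sum>i<n. prob (A i))"
      by (rule finite_measure_finite_Union) (use A in auto)
    also have "\<dots> = real n * q" using A by simp
    finally show ?thesis using nq by simp
  qed
  have sm: "(\<lambda>\<omega>. \<Sum>i<n. X i \<omega>) \<in> borel_measurable M"
    by (intro borel_measurable_sum) (use Xm in auto)
  have seteq: "{\<omega> \<in> space M. (\<Sum>i<n. X i \<omega>) \<le> 0} = space M - ?U"
  proof -
    have "(\<Sum>i<n. X i \<omega>) \<le> 0 \<longleftrightarrow> \<omega> \<notin> ?U" for \<omega>
    proof -
      have nn: "\<And>i. i \<in> {..<n} \<Longrightarrow> 0 \<le> X i \<omega>" by (simp add: X_def)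
      have "(\<Sum>i<n. X i \<omega>) \<le> 0 \<longleftrightarrow> (\<Sum>i<n. X i \<omega>) = 0" using sum_nonneg[of "{..<n}" "\<lambda>i. X i \<omega>", OF nn] by linarith
      also have "\<dots> \<longleftrightarrow> (\<forall>i\<in>{..<n}. X i \<omega> = 0)" using sum_nonneg_eq_0_iff[of "{..<n}" "\<lambda>i. X i \<omega>", OF _ nn] by simp
      also have "\<dots> \<longleftrightarrow> \<omega> \<notin> ?U" by (auto simp: X_def indicator_def)
      finally show ?thesis .
    qed
    thus ?thesis by auto
  qed
  have PS: "prob {\<omega> \<in> space M. (\<Sum>i<n. X i \<omega>) \<le> 0} = 1 - \<gamma>"
    unfolding seteq using prob_compl[OF U] PU by simp
  have Seq: "{\<beta> \<in> {0<..<1}. VaR M \<beta> (\<lambda>\<omega>. \<Sum>i<n. X i \<omega>) \<le> (\<Sum>i<n. VaR M \<alpha> (X i))}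
           = {\<beta> \<in> {0<..<1}. \<gamma> \<le> \<beta>}"
  proof -
    have "(\<Sum>i<n. VaR M \<alpha> (X i)) = 0" using VX by simp
    moreover have "VaR M \<beta> (\<lambda>\<omega>. \<Sum>i<n. X i \<omega>) \<le> 0 \<longleftrightarrow> \<gamma> \<le> \<beta>" if "\<beta> \<in> {0<..<1}" for \<beta>
      using VaR_le_iff[OF sm, of \<beta> 0] that PS by auto
    ultimately show ?thesis by auto
  qed
  have "DQ (VaR M) \<alpha> n X = t"
    unfolding DQ_infS Seq infS_eq[OF g0 g1] using a by (simp add: \<gamma>_def)
  thus ?thesis using Xm by blast
qed

end


definition Uu :: "real measure" where "Uu = restrict_space lborel {0<..<1::real}"

lemma Uu_Int: "{0<..<1::real} \<inter> space lborel \<in> sets lborel" by simp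

lemma space_Uu: "space Uu = {0<..<1}" by (simp add: Uu_def)

lemma sets_Uu_iff: "A \<in> sets Uu \<longleftrightarrow> A \<subseteq> {0<..<1} \<and> A \<in> sets borel"
  unfolding Uu_def using sets_restrict_space_iff[OF Uu_Int] by simp

lemma prob_space_Uu: "prob_space Uu"
proof
  show "emeasure Uu (space Uu) = 1"
    unfolding space_Uu unfolding Uu_def by (subst emeasure_restrict_space) auto
qed

context prob_space begin

lemma VaR_set_Uu:
  assumes X: "X \<in> borel_measurable M"
  shows "{w \<in> space Uu. VaR M w X \<le> y} = {0<..<1} \<inter> {1 - measure M {\<omega>\<in>space M. X \<omega> \<le> y}..}"
  using VaR_le_iff[OF X] by (auto simp: space_Uu)

lemma VaR_meas_Uu:
  assumes X: "X \<in> borel_measurable M"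
  shows "(\<lambda>\<beta>. VaR M \<beta> X) \<in> borel_measurable Uu"
  unfolding borel_measurable_iff_le
  using VaR_set_Uu[OF X] by (auto simp: sets_Uu_iff)

lemma distr_VaR_eq:
  assumes X: "X \<in> borel_measurable M"
  shows "distr Uu borel (\<lambda>\<beta>. VaR M \<beta> X) = distr M borel X"
proof (rule cdf_unique)
  interpret U: prob_space Uu by (rule prob_space_Uu)
  show "real_distribution (distr Uu borel (\<lambda>\<beta>. VaR M \<beta> X))"
    using VaR_meas_Uu[OF X] by simp
  show "real_distribution (distr M borel X)" using X by simp
  show "cdf (distr Uu borel (\<lambda>\<beta>. VaR M \<beta> X)) = cdf (distr M borel X)"
  proof
    fix y
    let ?F = "measure M {\<omega>\<in>space M. X \<omega> \<le> y}"
    have F01: "0 \<le> ?F" "?F \<le> 1" by auto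
    have "cdf (distr Uu borel (\<lambda>\<beta>. VaR M \<beta> X)) y = measure Uu {w \<in> space Uu. VaR M w X \<le> y}"
      by (rule U.cdf_distr_eq[OF VaR_meas_Uu[OF X]])
    also have "\<dots> = measure Uu ({0<..<1} \<inter> {1 - ?F..})" by (simp add: VaR_set_Uu[OF X])
    also have "\<dots> = measure lborel ({0<..<1} \<inter> {1 - ?F..})"
      unfolding Uu_def by (rule measure_restrict_space) auto
    also have "\<dots> = ?F"
    proof (cases "?F = 1")
      case True
      hence "{0<..<1} \<inter> {1 - ?F..} = {0<..<1::real}" by auto
      thus ?thesis using True by simp
    next
      case False
      have F1: "?F < 1" using False F01(2) by linarith
      have "{0<..<1} \<inter> {1 - ?F..} = {1 - ?F..<1::real}"
      proof (intro set_eqI iffI)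
        fix x assume "x \<in> {1 - ?F..<1::real}" thus "x \<in> {0<..<1} \<inter> {1 - ?F..}" using F1 by auto
      qed auto
      thus ?thesis using F01 by simp
    qed
    also have "\<dots> = cdf (distr M borel X) y" using cdf_distr_eq[OF X] by simp
    finally show "cdf (distr Uu borel (\<lambda>\<beta>. VaR M \<beta> X)) y = cdf (distr M borel X) y" .
  qed
qed

lemma quantile_integrable:
  fixes g :: "real \<Rightarrow> real"
  assumes X: "X \<in> borel_measurable M" and g: "g \<in> borel_measurable borel"
  shows "integrable lborel (\<lambda>\<beta>. indicator {0<..<1} \<beta> * g (VaR M \<beta> X)) \<longleftrightarrow> integrable M (\<lambda>\<omega>. g (X \<omega>))"
proof -
  have "integrable lborel (\<lambda>\<beta>. indicator {0<..<1} \<beta> * g (VaR M \<beta> X))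
      \<longleftrightarrow> integrable Uu (\<lambda>\<beta>. g (VaR M \<beta> X))"
    unfolding Uu_def by (subst integrable_restrict_space) auto
  also have "\<dots> \<longleftrightarrow> integrable (distr Uu borel (\<lambda>\<beta>. VaR M \<beta> X)) g"
    using VaR_meas_Uu[OF X] g by (subst integrable_distr_eq) auto
  also have "\<dots> \<longleftrightarrow> integrable (distr M borel X) g" by (simp add: distr_VaR_eq[OF X])
  also have "\<dots> \<longleftrightarrow> integrable M (\<lambda>\<omega>. g (X \<omega>))" using X g by (subst integrable_distr_eq) auto
  finally show ?thesis .
qed

lemma quantile_integral:
  fixes g :: "real \<Rightarrow> real"
  assumes X: "X \<in> borel_measurable M" and g: "g \<in> borel_measurable borel"
  shows "integral\<^sup>L lborel (\<lambda>\<beta>. indicator {0<..<1} \<beta> * g (VaR M \<beta> X)) = expectation (\<lambda>\<omega>. g (X \<omega>))"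
proof -
  have "integral\<^sup>L lborel (\<lambda>\<beta>. indicator {0<..<1} \<beta> * g (VaR M \<beta> X))
      = integral\<^sup>L Uu (\<lambda>\<beta>. g (VaR M \<beta> X))"
    unfolding Uu_def by (subst integral_restrict_space) auto
  also have "\<dots> = integral\<^sup>L (distr Uu borel (\<lambda>\<beta>. VaR M \<beta> X)) g"
    using VaR_meas_Uu[OF X] g by (subst integral_distr) auto
  also have "\<dots> = integral\<^sup>L (distr M borel X) g" by (simp add: distr_VaR_eq[OF X])
  also have "\<dots> = expectation (\<lambda>\<omega>. g (X \<omega>))" using X g by (subst integral_distr) auto
  finally show ?thesis .
qed

end


context prob_space begin

lemma ES_RU:
  assumes X: "integrable M X" and a: "0 < \<alpha>" "\<alpha> < 1"
  shows "ES M \<alpha> X \<le> t + expectation (\<lambda>\<omega>. max 0 (X \<omega> - t)) / \<alpha>"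
    and "ES M \<alpha> X = VaR M \<alpha> X + expectation (\<lambda>\<omega>. max 0 (X \<omega> - VaR M \<alpha> X)) / \<alpha>"
proof -
  have Xm: "X \<in> borel_measurable M" using X by auto
  let ?V = "\<lambda>\<beta>. VaR M \<beta> X"
  have ESe: "ES M \<alpha> X = integral\<^sup>L lborel (\<lambda>\<beta>. indicator {0<..<\<alpha>} \<beta> * ?V \<beta>) / \<alpha>"
    by (simp add: ES_def set_lebesgue_integral_def)
  define h where "h t \<beta> = indicator {0<..<1} \<beta> * max 0 (?V \<beta> - t)" for t \<beta>
  have gm: "(\<lambda>x::real. max 0 (x - t)) \<in> borel_measurable borel" for t by measurable
  have ih: "integrable lborel (h t)" for t
    unfolding h_def using quantile_integrable[OF Xm gm[of t]] X by auto
  have Ih: "integral\<^sup>L lborel (h t) = expectation (\<lambda>\<omega>. max 0 (X \<omega> - t))" for t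
    unfolding h_def by (rule quantile_integral[OF Xm gm])
  have "integrable lborel (\<lambda>\<beta>. indicator {0<..<1} \<beta> * (\<lambda>x::real. x) (?V \<beta>))"
    using quantile_integrable[OF Xm, of "\<lambda>x. x"] X by simp
  hence i1: "integrable lborel (\<lambda>\<beta>. indicator {0<..<\<alpha>} \<beta> *\<^sub>R (indicator {0<..<1} \<beta> * ?V \<beta>))"
    by (intro integrable_mult_indicator) auto
  have eqf: "(\<lambda>\<beta>. indicator {0<..<\<alpha>} \<beta> *\<^sub>R (indicator {0<..<1} \<beta> * ?V \<beta>)) = (\<lambda>\<beta>. indicator {0<..<\<alpha>} \<beta> * ?V \<beta>)"
    using a by (auto simp: fun_eq_iff split: split_indicator)
  have iV: "integrable lborel (\<lambda>\<beta>. indicator {0<..<\<alpha>} \<beta> * ?V \<beta>)" using i1 unfolding eqf .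
  have iI: "integrable lborel (\<lambda>\<beta>. indicator {0<..<\<alpha>} \<beta> * t)" for t :: real
    by (intro integrable_mult_left integrable_real_indicator) (use a in \<open>auto simp: emeasure_lborel_Ioo\<close>)
  have II: "integral\<^sup>L lborel (\<lambda>\<beta>. indicator {0<..<\<alpha>} \<beta> * t) = \<alpha> * t" for t :: real
    using a by (simp add: integral_mult_left_zero)
  have sum_eq: "integral\<^sup>L lborel (\<lambda>\<beta>. indicator {0<..<\<alpha>} \<beta> * t + h t \<beta>) = \<alpha> * t + expectation (\<lambda>\<omega>. max 0 (X \<omega> - t))" for t
    using iI ih II Ih by (simp add: Bochner_Integration.integral_add)
  show "ES M \<alpha> X \<le> t + expectation (\<lambda>\<omega>. max 0 (X \<omega> - t)) / \<alpha>"
  proof -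
    have "integral\<^sup>L lborel (\<lambda>\<beta>. indicator {0<..<\<alpha>} \<beta> * ?V \<beta>) \<le> integral\<^sup>L lborel (\<lambda>\<beta>. indicator {0<..<\<alpha>} \<beta> * t + h t \<beta>)"
    proof (rule integral_mono[OF iV])
      show "integrable lborel (\<lambda>\<beta>. indicator {0<..<\<alpha>} \<beta> * t + h t \<beta>)" using iI ih by auto
      fix \<beta> show "indicator {0<..<\<alpha>} \<beta> * ?V \<beta> \<le> indicator {0<..<\<alpha>} \<beta> * t + h t \<beta>"
        using a by (auto simp: h_def split: split_indicator)
    qed
    thus ?thesis using sum_eq[of t] ESe a by (simp add: divide_le_eq field_simps)
  qed
  let ?t = "VaR M \<alpha> X"
  have pw: "indicator {0<..<\<alpha>} \<beta> * ?V \<beta> = indicator {0<..<\<alpha>} \<beta> * ?t + h ?t \<beta>" for \<beta>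
  proof (cases "\<beta> \<in> {0<..<\<alpha>}")
    case True
    hence "?t \<le> ?V \<beta>" using VaR_antimono[OF Xm, of \<beta> \<alpha>] a by auto
    thus ?thesis using True a by (auto simp: h_def)
  next
    case False
    show ?thesis
    proof (cases "\<beta> \<in> {0<..<1}")
      case True
      hence "?V \<beta> \<le> ?t" using VaR_antimono[OF Xm, of \<alpha> \<beta>] a False by auto
      thus ?thesis using True False by (auto simp: h_def)
    next
      case F2: False
      thus ?thesis using False by (simp add: h_def)
    qed
  qed
  show "ES M \<alpha> X = ?t + expectation (\<lambda>\<omega>. max 0 (X \<omega> - ?t)) / \<alpha>"
    using ESe sum_eq[of ?t] pw a by (simp add: field_simps)
qed

lemma ES_subadd:
  fixes X :: "nat \<Rightarrow> 'a \<Rightarrow> real"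
  assumes X: "\<And>i. i < n \<Longrightarrow> integrable M (X i)" and a: "0 < \<alpha>" "\<alpha> < 1"
  shows "ES M \<alpha> (\<lambda>\<omega>. \<Sum>i<n. X i \<omega>) \<le> (\<Sum>i<n. ES M \<alpha> (X i))"
proof -
  let ?t = "\<lambda>i. VaR M \<alpha> (X i)"
  let ?E = "\<lambda>i. expectation (\<lambda>\<omega>. max 0 (X i \<omega> - ?t i))"
  have iS: "integrable M (\<lambda>\<omega>. \<Sum>i<n. X i \<omega>)" using X by auto
  have ip: "integrable M (\<lambda>\<omega>. max 0 (X i \<omega> - ?t i))" if "i < n" for i
    using X[OF that] by auto
  have "ES M \<alpha> (\<lambda>\<omega>. \<Sum>i<n. X i \<omega>) \<le> (\<Sum>i<n. ?t i) + expectation (\<lambda>\<omega>. max 0 ((\<Sum>i<n. X i \<omega>) - (\<Sum>i<n. ?t i))) / \<alpha>"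
    by (rule ES_RU(1)[OF iS a])
  also have "expectation (\<lambda>\<omega>. max 0 ((\<Sum>i<n. X i \<omega>) - (\<Sum>i<n. ?t i))) \<le> expectation (\<lambda>\<omega>. \<Sum>i<n. max 0 (X i \<omega> - ?t i))"
  proof (rule integral_mono)
    show "integrable M (\<lambda>\<omega>. max 0 ((\<Sum>i<n. X i \<omega>) - (\<Sum>i<n. ?t i)))" using iS by auto
    show "integrable M (\<lambda>\<omega>. \<Sum>i<n. max 0 (X i \<omega> - ?t i))" using ip by auto
    fix \<omega>
    have "(\<Sum>i<n. X i \<omega>) - (\<Sum>i<n. ?t i) = (\<Sum>i<n. X i \<omega> - ?t i)" by (simp add: sum_subtractf)
    also have "\<dots> \<le> (\<Sum>i<n. max 0 (X i \<omega> - ?t i))" by (intro sum_mono) simp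
    finally show "max 0 ((\<Sum>i<n. X i \<omega>) - (\<Sum>i<n. ?t i)) \<le> (\<Sum>i<n. max 0 (X i \<omega> - ?t i))"
      by (simp add: sum_nonneg)
  qed
  also have "expectation (\<lambda>\<omega>. \<Sum>i<n. max 0 (X i \<omega> - ?t i)) = (\<Sum>i<n. ?E i)"
    by (rule Bochner_Integration.integral_sum) (use ip in auto)
  finally have "ES M \<alpha> (\<lambda>\<omega>. \<Sum>i<n. X i \<omega>) \<le> (\<Sum>i<n. ?t i) + (\<Sum>i<n. ?E i) / \<alpha>"
    using a by (simp add: divide_right_mono)
  also have "\<dots> = (\<Sum>i<n. ?t i + ?E i / \<alpha>)" by (simp add: sum.distrib sum_divide_distrib)
  also have "\<dots> = (\<Sum>i<n. ES M \<alpha> (X i))"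
    by (rule sum.cong) (use ES_RU(2)[OF X a] in auto)
  finally show ?thesis .
qed

end


lemma sum_peel2:
  fixes a b :: real and n :: nat
  assumes "n \<ge> 2"
  shows "(\<Sum>i<n. (if i = 0 then a else if i = 1 then b else 0)) = a + b"
proof -
  obtain m where n: "n = Suc (Suc m)" using assms by (metis add_2_eq_Suc le_Suc_ex)
  show ?thesis unfolding n by (simp only: sum.lessThan_Suc_shift) simp
qed

context prob_space begin

lemma int_ind: "A \<in> sets M \<Longrightarrow> integrable M (indicator A :: 'a \<Rightarrow> real)"
  by (intro integrable_real_indicator) (simp_all add: emeasure_finite less_top[symmetric])

lemma VaR_eq_c:
  assumes X: "X \<in> borel_measurable M" and b: "0 < \<beta>" "\<beta> < 1"
    and h1: "1 - \<beta> \<le> prob {\<omega>\<in>space M. X \<omega> \<le> c}"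
    and h2: "prob {\<omega>\<in>space M. X \<omega> < c} < 1 - \<beta>"
  shows "VaR M \<beta> X = c"
proof (rule VaR_eqI[OF X b])
  fix y
  show "1 - \<beta> \<le> prob {\<omega> \<in> space M. X \<omega> \<le> y} \<longleftrightarrow> c \<le> y"
  proof (cases "c \<le> y")
    case True
    have "prob {\<omega>\<in>space M. X \<omega> \<le> c} \<le> prob {\<omega> \<in> space M. X \<omega> \<le> y}"
      by (rule finite_measure_mono) (use True X in \<open>auto simp: borel_measurable_iff_le\<close>)
    thus ?thesis using True h1 by simp
  next
    case False
    have "prob {\<omega>\<in>space M. X \<omega> \<le> y} \<le> prob {\<omega> \<in> space M. X \<omega> < c}"
      by (rule finite_measure_mono) (use False X in \<open>auto simp: borel_measurable_iff_less\<close>)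
    thus ?thesis using False h2 by simp
  qed
qed

lemma ES_indicator:
  assumes C: "C \<in> sets M" and b: "0 < \<beta>" "\<beta> < 1"
  shows "ES M \<beta> (indicator C) = min (prob C) \<beta> / \<beta>"
proof -
  have Xi: "integrable M (indicator C :: 'a \<Rightarrow> real)" using C by (rule int_ind)
  have Xm: "(indicator C :: 'a \<Rightarrow> real) \<in> borel_measurable M" using C by simp
  have s1: "{\<omega>\<in>space M. (indicator C \<omega> :: real) \<le> 0} = space M - C" by (auto simp: indicator_def)
  have s2: "{\<omega>\<in>space M. (indicator C \<omega> :: real) < 0} = {}" by (auto simp: indicator_def)
  have s3: "{\<omega>\<in>space M. (indicator C \<omega> :: real) \<le> 1} = space M" by (auto simp: indicator_def)
  have s4: "{\<omega>\<in>space M. (indicator C \<omega> :: real) < 1} = space M - C" by (auto simp: indicator_def)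
  have pc: "prob (space M - C) = 1 - prob C" using prob_compl[OF C] .
  show ?thesis
  proof (cases "prob C \<le> \<beta>")
    case True
    have V: "VaR M \<beta> (indicator C) = 0"
      by (rule VaR_eq_c[OF Xm b]) (use True b pc in \<open>simp_all add: s1 s2\<close>)
    have "(\<lambda>\<omega>. max 0 ((indicator C \<omega> :: real) - 0)) = indicator C" by (auto simp: fun_eq_iff indicator_def)
    hence "expectation (\<lambda>\<omega>. max 0 ((indicator C \<omega> :: real) - 0)) = prob C"
      using C by (simp add: sets.Int_space_eq2)
    thus ?thesis using ES_RU(2)[OF Xi b] V True by simp
  next
    case False
    have V: "VaR M \<beta> (indicator C) = 1"
      by (rule VaR_eq_c[OF Xm b]) (use False b pc in \<open>simp_all add: s3 s4 prob_space\<close>)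
    have "(\<lambda>\<omega>. max 0 ((indicator C \<omega> :: real) - 1)) = (\<lambda>_. 0)" by (auto simp: fun_eq_iff indicator_def)
    hence "expectation (\<lambda>\<omega>. max 0 ((indicator C \<omega> :: real) - 1)) = 0" by simp
    thus ?thesis using ES_RU(2)[OF Xi b] V False b by simp
  qed
qed

lemma ES_diff_indicator:
  assumes C: "C \<in> sets M" and B: "B \<in> sets M" "B \<subseteq> C" and b: "0 < \<beta>" "\<beta> < 1"
    and p: "prob C < 1 - \<beta>"
  shows "ES M \<beta> (\<lambda>\<omega>. indicator B \<omega> - indicator C \<omega>) = 0"
proof -
  let ?Y = "\<lambda>\<omega>. (indicator B \<omega> - indicator C \<omega> :: real)"
  have Xi: "integrable M ?Y" using int_ind[OF B(1)] int_ind[OF C] by (rule Bochner_Integration.integrable_diff)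
  have Xm: "?Y \<in> borel_measurable M" using Xi by auto
  have s1: "{\<omega>\<in>space M. ?Y \<omega> \<le> 0} = space M" using B by (auto simp: indicator_def)
  have s2: "{\<omega>\<in>space M. ?Y \<omega> < 0} \<subseteq> C" by (auto simp: indicator_def split: if_splits)
  have "prob {\<omega>\<in>space M. ?Y \<omega> < 0} \<le> prob C"
    by (rule finite_measure_mono[OF s2 C])
  moreover have h1: "1 - \<beta> \<le> prob {\<omega>\<in>space M. ?Y \<omega> \<le> 0}"
    unfolding s1 using b by (simp add: prob_space)
  ultimately have V: "VaR M \<beta> ?Y = 0"
    using VaR_eq_c[OF Xm b h1] p by linarith
  have "(\<lambda>\<omega>. max 0 (?Y \<omega> - 0)) = (\<lambda>_. 0)" using B by (auto simp: fun_eq_iff indicator_def)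
  hence "expectation (\<lambda>\<omega>. max 0 (?Y \<omega> - 0)) = 0" by simp
  thus ?thesis using ES_RU(2)[OF Xi b] V by simp
qed

lemma ES_zero:
  assumes b: "0 < \<beta>" "\<beta> < 1"
  shows "ES M \<beta> (\<lambda>\<omega>. 0) = 0"
proof -
  have V: "VaR M \<beta> (\<lambda>\<omega>. 0) = 0" by (rule VaR_eq_c) (use b in \<open>auto simp: prob_space\<close>)
  thus ?thesis using ES_RU(2)[of "\<lambda>\<omega>. 0", OF _ b] by simp
qed

lemma DQ_ES_upper:
  assumes X: "\<forall>i<n. integrable M (X i)" and a: "0 < \<alpha>" "\<alpha> < 1"
  shows "DQ (ES M) \<alpha> n X \<in> {0 .. 1}"
proof -
  let ?S = "{\<beta> \<in> {0<..<1}. ES M \<beta> (\<lambda>\<omega>. \<Sum>i<n. X i \<omega>) \<le> (\<Sum>i<n. ES M \<alpha> (X i))}"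
  have sub: "?S \<subseteq> {0<..<1}" by auto
  have "\<alpha> \<in> ?S" using ES_subadd[of n X \<alpha>] X a by auto
  hence "infS ?S \<le> \<alpha>" by (rule infS_le[OF sub])
  thus ?thesis unfolding DQ_infS using infS_bounds[OF sub] a by simp
qed

lemma DQ_ES_attain:
  assumes al: "atomless M" and n: "n \<ge> 2" and a: "0 < \<alpha>" "\<alpha> < 1"
    and t: "0 \<le> t" "t \<le> 1"
  shows "\<exists>X. (\<forall>i<n. integrable M (X i)) \<and> DQ (ES M) \<alpha> n X = t"
proof -
  define \<gamma> where "\<gamma> = t * \<alpha>"
  define s where "s = \<alpha> * (1 - \<alpha>)"
  define q where "q = \<gamma> * (1 - \<alpha>)"
  have g0: "0 \<le> \<gamma>" and ga: "\<gamma> \<le> \<alpha>" using t a by (auto simp: \<gamma>_def mult_le_cancel_right1)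
  have s0: "0 < s" and s1: "s < 1 - \<alpha>" and sa: "s < \<alpha>" using a by (auto simp: s_def)
  have q0: "0 \<le> q" and qs: "q \<le> s" using g0 ga a
    by (auto simp: q_def s_def mult_right_mono)
  have "0 \<le> \<gamma> * \<alpha>" using g0 a by simp
  hence qg: "q \<le> \<gamma>" by (simp add: q_def algebra_simps)
  obtain C where C: "C \<in> sets M" "prob C = s"
    using exists_subset_measure[OF al sets.top, of s] s0 s1 a by (auto simp: prob_space)
  obtain B where B: "B \<in> sets M" "B \<subseteq> C" "prob B = q"
    using exists_subset_measure[OF al C(1), of q] q0 qs C by auto
  define X :: "nat \<Rightarrow> 'a \<Rightarrow> real" where
    "X i = (if i = 0 then indicator C else if i = 1 then (\<lambda>\<omega>. indicator B \<omega> - indicator C \<omega>) else (\<lambda>\<omega>. 0))" for i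
  have Xi: "\<forall>i<n. integrable M (X i)"
    using B C by (auto simp: X_def intro!: int_ind Bochner_Integration.integrable_diff)
  have sumX: "(\<lambda>\<omega>. \<Sum>i<n. X i \<omega>) = indicator B"
  proof
    fix \<omega>
    have "(\<Sum>i<n. X i \<omega>) = (\<Sum>i<n. (if i = 0 then indicator C \<omega> else if i = 1 then indicator B \<omega> - indicator C \<omega> else 0))"
      by (rule sum.cong) (auto simp: X_def)
    also have "\<dots> = indicator B \<omega>" using sum_peel2[OF n] by simp
    finally show "(\<Sum>i<n. X i \<omega>) = indicator B \<omega>" .
  qed
  have ESX: "(\<Sum>i<n. ES M \<alpha> (X i)) = s / \<alpha>"
  proof -
    have "(\<Sum>i<n. ES M \<alpha> (X i)) = (\<Sum>i<n. (if i = 0 then s / \<alpha> else if i = 1 then 0 else 0))"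
    proof (rule sum.cong)
      fix i
      show "ES M \<alpha> (X i) = (if i = 0 then s / \<alpha> else if i = 1 then 0 else 0)"
        using ES_indicator[OF C(1) a] ES_diff_indicator[OF C(1) B(1,2) a] ES_zero[OF a] C(2) sa s1
        by (auto simp: X_def)
    qed simp
    also have "\<dots> = s / \<alpha>" using sum_peel2[OF n] by simp
    finally show ?thesis .
  qed
  have Seq: "{\<beta> \<in> {0<..<1}. ES M \<beta> (\<lambda>\<omega>. \<Sum>i<n. X i \<omega>) \<le> (\<Sum>i<n. ES M \<alpha> (X i))}
           = {\<beta> \<in> {0<..<1}. \<gamma> \<le> \<beta>}"
  proof -
    have "ES M \<beta> (indicator B) \<le> s / \<alpha> \<longleftrightarrow> \<gamma> \<le> \<beta>" if b: "\<beta> \<in> {0<..<1}" for \<beta>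
    proof -
      have b': "0 < \<beta>" "\<beta> < 1" using b by auto
      have sa': "s / \<alpha> = 1 - \<alpha>" using a by (simp add: s_def)
      show ?thesis
      proof (cases "q \<le> \<beta>")
        case True
        have "ES M \<beta> (indicator B) = q / \<beta>" using ES_indicator[OF B(1) b'] B(3) True by simp
        moreover have "q / \<beta> \<le> 1 - \<alpha> \<longleftrightarrow> q \<le> (1 - \<alpha>) * \<beta>" using b' by (simp add: divide_le_eq)
        moreover have "q \<le> (1 - \<alpha>) * \<beta> \<longleftrightarrow> \<gamma> \<le> \<beta>" using a by (simp add: q_def mult.commute)
        ultimately show ?thesis using sa' by simp
      next
        case False
        have "ES M \<beta> (indicator B) = 1" using ES_indicator[OF B(1) b'] B(3) False b' by simp
        thus ?thesis using sa' a False qg by simp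
      qed
    qed
    thus ?thesis unfolding sumX ESX by auto
  qed
  have iv: "infS {\<beta> \<in> {0<..<1}. \<gamma> \<le> \<beta>} = \<gamma>" by (rule infS_eq[OF g0]) (use ga a in simp)
  have "DQ (ES M) \<alpha> n X = t"
    unfolding DQ_infS Seq iv using a by (simp add: \<gamma>_def)
  thus ?thesis using Xi by blast
qed

end


theorem theorem1:
  fixes M :: "'a measure" and n :: nat and \<alpha> :: real
  assumes "prob_space M" and "atomless M"
    and "n \<ge> 2" and "0 < \<alpha>" and "\<alpha> < 1"
  shows "{DQ (VaR M) \<alpha> n X | X. \<forall>i<n. X i \<in> borel_measurable M} = {0 .. min (real n) (1 / \<alpha>)}
       \<and> {DQ (ES M) \<alpha> n X | X. \<forall>i<n. integrable M (X i)} = {0 .. 1}"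
proof -
  interpret P: prob_space M by fact
  have 1: "{DQ (VaR M) \<alpha> n X | X. \<forall>i<n. X i \<in> borel_measurable M} = {0 .. min (real n) (1 / \<alpha>)}"
  proof (intro set_eqI iffI)
    fix x assume "x \<in> {DQ (VaR M) \<alpha> n X | X. \<forall>i<n. X i \<in> borel_measurable M}"
    then obtain X where "\<forall>i<n. X i \<in> borel_measurable M" "x = DQ (VaR M) \<alpha> n X" by blast
    thus "x \<in> {0 .. min (real n) (1 / \<alpha>)}" using P.DQ_VaR_upper assms by blast
  next
    fix x assume "x \<in> {0 .. min (real n) (1 / \<alpha>)}"
    then obtain X where "\<forall>i<n. X i \<in> borel_measurable M" "DQ (VaR M) \<alpha> n X = x"
      using P.DQ_VaR_attain[of n \<alpha> x] assms by auto
    thus "x \<in> {DQ (VaR M) \<alpha> n X | X. \<forall>i<n. X i \<in> borel_measurable M}" by blast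
  qed
  have 2: "{DQ (ES M) \<alpha> n X | X. \<forall>i<n. integrable M (X i)} = {0 .. 1}"
  proof (intro set_eqI iffI)
    fix x assume "x \<in> {DQ (ES M) \<alpha> n X | X. \<forall>i<n. integrable M (X i)}"
    then obtain X where "\<forall>i<n. integrable M (X i)" "x = DQ (ES M) \<alpha> n X" by blast
    thus "x \<in> {0 .. 1}" using P.DQ_ES_upper assms by blast
  next
    fix x :: real assume "x \<in> {0 .. 1}"
    then obtain X where "\<forall>i<n. integrable M (X i)" "DQ (ES M) \<alpha> n X = x"
      using P.DQ_ES_attain[of n \<alpha> x] assms by auto
    thus "x \<in> {DQ (ES M) \<alpha> n X | X. \<forall>i<n. integrable M (X i)}" by blast
  qed
  show ?thesis using 1 2 by blast
qed

end
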